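(* Let $V$ be a finite nonempty set, let $d \ge 1$ be an integer, and let $R = (\le_1, \ldots, \le_d)$ be a $d$-representation on $V$. Then the supremum section $\Sigma(R)$ is collapsible.
   Context: A $d$-representation on $V$ is a family of $d$ linear orders $\le_1,\ldots,\le_d$ on $V$. For a linear order $\le$ on $V$, $x\in V$ and $F\subseteq V$, $x$ dominates $F$ in $\le$ if $f\le x$ for every $f\in F$; $x$ dominates $F$ in $R$ if $x$ dominates $F$ in some $\le_i$. The supremum section $\Sigma(R)$ is the set of all subsets $F\subseteq V$ such that every $v\in V$ dominates $F$ in $R$ (in particular $\emptyset\in\Sigma(R)$); it is an abstract simplicial complex (a family of subsets of $V$ closed under taking subsets), whose elements are called faces and whose inclusion-maximal faces are called facets. A face $F$ of a simplicial complex $\Delta$ is free if it is nonempty, not maximal, and contained in exactly one facet of $\Delta$. $\Delta$ collapses to $\Gamma$ if there are simplicial complexes $\Delta_1=\Delta,\Delta_2,\ldots,\Delta_k=\Gamma$ and, for each $i\le k-1$, a free face $F_i$ of $\Delta_i$ with $\Delta_{i+1}=\Delta_i\setminus\{F\in\Delta_i : F_i\subseteq F\}$. $\Delta$ is collapsible if it collapses to a point, i.e. to a complex of the form $\{\emptyset,\{v\}\}$. *)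

theory Defs
  imports Main
begin

definition d_representation :: "'a set \<Rightarrow> nat \<Rightarrow> (nat \<Rightarrow> 'a rel) \<Rightarrow> bool" where
  "d_representation V d R \<longleftrightarrow> (\<forall>i<d. linear_order_on V (R i))"

definition dominates_in_order :: "'a rel \<Rightarrow> 'a \<Rightarrow> 'a set \<Rightarrow> bool" where
  "dominates_in_order r x F \<longleftrightarrow> (\<forall>f\<in>F. (f, x) \<in> r)"

definition dominates_in_rep :: "nat \<Rightarrow> (nat \<Rightarrow> 'a rel) \<Rightarrow> 'a \<Rightarrow> 'a set \<Rightarrow> bool" where
  "dominates_in_rep d R x F \<longleftrightarrow> (\<exists>i<d. dominates_in_order (R i) x F)"

definition supremum_section :: "'a set \<Rightarrow> nat \<Rightarrow> (nat \<Rightarrow> 'a rel) \<Rightarrow> 'a set set" where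
  "supremum_section V d R = {F. F \<subseteq> V \<and> (\<forall>v\<in>V. dominates_in_rep d R v F)}"

definition facet :: "'a set set \<Rightarrow> 'a set \<Rightarrow> bool" where
  "facet \<Delta> G \<longleftrightarrow> G \<in> \<Delta> \<and> (\<forall>H\<in>\<Delta>. G \<subseteq> H \<longrightarrow> H = G)"

definition free_face :: "'a set set \<Rightarrow> 'a set \<Rightarrow> bool" where
  "free_face \<Delta> F \<longleftrightarrow> F \<in> \<Delta> \<and> F \<noteq> {} \<and> \<not> facet \<Delta> F \<and>
     (\<exists>!G. facet \<Delta> G \<and> F \<subseteq> G)"

definition elementary_collapse :: "'a set set \<Rightarrow> 'a set set \<Rightarrow> bool" where
  "elementary_collapse \<Delta> \<Gamma> \<longleftrightarrow>
     (\<exists>F. free_face \<Delta> F \<and> \<Gamma> = \<Delta> - {G \<in> \<Delta>. F \<subseteq> G})"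

definition collapses_to :: "'a set set \<Rightarrow> 'a set set \<Rightarrow> bool" where
  "collapses_to \<Delta> \<Gamma> \<longleftrightarrow> elementary_collapse\<^sup>*\<^sup>* \<Delta> \<Gamma>"

definition collapsible :: "'a set set \<Rightarrow> bool" where
  "collapsible \<Delta> \<longleftrightarrow> (\<exists>v. collapses_to \<Delta> {{}, {v}})"

end

theory Submission
  imports Defs
begin

definition cc :: "'a set \<Rightarrow> nat \<Rightarrow> (nat \<Rightarrow> 'a rel) \<Rightarrow> (nat \<Rightarrow> 'a set) \<Rightarrow> 'a set set" where
  "cc V d R A = {K. K \<subseteq> V \<and> (\<forall>q\<in>V. \<exists>j<d. q \<in> A j \<and> (\<forall>f\<in>K. (f, q) \<in> R j))}"

definition okp :: "'a set \<Rightarrow> nat \<Rightarrow> (nat \<Rightarrow> 'a rel) \<Rightarrow> (nat \<Rightarrow> 'a set) \<Rightarrow> bool" where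
  "okp V d R A \<longleftrightarrow> finite V \<and> (\<forall>j<d. 
     (\<forall>x\<in>V. \<forall>y\<in>V. (x, y) \<in> R j \<or> (y, x) \<in> R j) \<and>
     (\<forall>x\<in>V. \<forall>y\<in>V. \<forall>z\<in>V. (x, y) \<in> R j \<longrightarrow> (y, z) \<in> R j \<longrightarrow> (x, z) \<in> R j) \<and>
     A j \<subseteq> V \<and> (\<forall>x\<in>A j. \<forall>y\<in>V. (x, y) \<in> R j \<longrightarrow> y \<in> A j))"

lemma ec_sub: "elementary_collapse L L' \<Longrightarrow> L' \<subseteq> L"
  by (auto simp: elementary_collapse_def)

lemma rt_sub: "elementary_collapse\<^sup>*\<^sup>* L L' \<Longrightarrow> L' \<subseteq> L"
  by (induct rule: rtranclp_induct) (auto dest: ec_sub)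

lemma facet_lift:
  assumes D: "\<forall>K\<in>D. w \<notin> K" and L: "\<forall>K\<in>L. w \<notin> K" and K: "w \<notin> K"
  shows "facet (D \<union> insert w ` L) (insert w K) \<longleftrightarrow> facet L K"
proof
  assume f: "facet (D \<union> insert w ` L) (insert w K)"
  then have m: "insert w K \<in> D \<union> insert w ` L" by (simp add: facet_def)
  then obtain K0 where K0: "K0 \<in> L" "insert w K = insert w K0" using D by auto
  then have "K0 = K" using L K by (metis insert_ident)
  with K0 have KL: "K \<in> L" by simp
  show "facet L K" unfolding facet_def
  proof (intro conjI ballI impI)
    fix H assume "H \<in> L" "K \<subseteq> H"
    then have "insert w H \<in> D \<union> insert w ` L" "insert w K \<subseteq> insert w H" by auto
    with f have "insert w H = insert w K" by (simp add: facet_def)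
    then show "H = K" using L K \<open>H \<in> L\<close> by (metis insert_ident)
  qed (rule KL)
next
  assume f: "facet L K"
  show "facet (D \<union> insert w ` L) (insert w K)" unfolding facet_def
  proof (intro conjI ballI impI)
    show "insert w K \<in> D \<union> insert w ` L" using f by (simp add: facet_def)
    fix H assume H: "H \<in> D \<union> insert w ` L" "insert w K \<subseteq> H"
    then have "H \<notin> D" using D by auto
    with H obtain H0 where H0: "H0 \<in> L" "H = insert w H0" by auto
    then have "K \<subseteq> H0" using H K by auto
    with f H0 have "H0 = K" by (simp add: facet_def)
    then show "H = insert w K" using H0 by simp
  qed
qed

lemma ec_lift:
  assumes ec: "elementary_collapse L L'" and D: "\<forall>K\<in>D. w \<notin> K" and L: "\<forall>K\<in>L. w \<notin> K"
  shows "elementary_collapse (D \<union> insert w ` L) (D \<union> insert w ` L')"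
proof -
  from ec obtain F where ff: "free_face L F" and L': "L' = L - {G \<in> L. F \<subseteq> G}"
    by (auto simp: elementary_collapse_def)
  from ff have FL: "F \<in> L" and Fne: "F \<noteq> {}" and nf: "\<not> facet L F"
    and ex: "\<exists>!G. facet L G \<and> F \<subseteq> G" by (auto simp: free_face_def)
  from ex obtain G where G: "facet L G" "F \<subseteq> G" and Gu: "\<And>H. facet L H \<Longrightarrow> F \<subseteq> H \<Longrightarrow> H = G"
    by blast
  have wF: "w \<notin> F" using FL L by auto
  have GL: "G \<in> L" using G by (simp add: facet_def)
  have wG: "w \<notin> G" using GL L by auto
  let ?T = "D \<union> insert w ` L"
  have ff: "free_face ?T (insert w F)" unfolding free_face_def
  proof (intro conjI)
    show "insert w F \<in> ?T" using FL by auto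
    show "insert w F \<noteq> {}" by simp
    show "\<not> facet ?T (insert w F)" using facet_lift[OF D L wF] nf by simp
    show "\<exists>!G. facet ?T G \<and> insert w F \<subseteq> G"
    proof (rule ex1I[of _ "insert w G"])
      show "facet ?T (insert w G) \<and> insert w F \<subseteq> insert w G"
        using facet_lift[OF D L wG] G by auto
      fix H assume H: "facet ?T H \<and> insert w F \<subseteq> H"
      then have HT: "H \<in> ?T" by (simp add: facet_def)
      have "H \<notin> D" using H D by auto
      with HT obtain H0 where H0: "H0 \<in> L" "H = insert w H0" by auto
      have wH0: "w \<notin> H0" using H0 L by auto
      have "facet L H0" using facet_lift[OF D L wH0] H H0 by simp
      moreover have "F \<subseteq> H0" using H H0 wF by auto
      ultimately have "H0 = G" using Gu by simp
      then show "H = insert w G" using H0 by simp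
    qed
  qed
  moreover have eq: "D \<union> insert w ` L' = ?T - {G \<in> ?T. insert w F \<subseteq> G}"
  proof (rule set_eqI)
    fix X
    show "X \<in> D \<union> insert w ` L' \<longleftrightarrow> X \<in> ?T - {G \<in> ?T. insert w F \<subseteq> G}"
    proof
      assume "X \<in> D \<union> insert w ` L'"
      then show "X \<in> ?T - {G \<in> ?T. insert w F \<subseteq> G}"
      proof
        assume "X \<in> D" then show ?thesis using D by auto
      next
        assume "X \<in> insert w ` L'"
        then obtain Y where Y: "Y \<in> L" "\<not> F \<subseteq> Y" "X = insert w Y" using L' by auto
        have "w \<notin> Y" using Y L by auto
        then have "\<not> insert w F \<subseteq> insert w Y" using Y wF by auto
        then show ?thesis using Y by auto
      qed
    next
      assume X: "X \<in> ?T - {G \<in> ?T. insert w F \<subseteq> G}"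
      then have XT: "X \<in> ?T" and nX: "\<not> insert w F \<subseteq> X" by auto
      show "X \<in> D \<union> insert w ` L'"
      proof (cases "X \<in> D")
        case True then show ?thesis by simp
      next
        case False
        with XT obtain Y where Y: "Y \<in> L" "X = insert w Y" by auto
        have "\<not> F \<subseteq> Y" using nX Y by auto
        then have "Y \<in> L'" using Y L' by simp
        then show ?thesis using Y by simp
      qed
    qed
  qed
  show ?thesis unfolding elementary_collapse_def by (rule exI[of _ "insert w F"], rule conjI[OF ff eq])
qed

lemma rt_lift:
  assumes "elementary_collapse\<^sup>*\<^sup>* L L'" and D: "\<forall>K\<in>D. w \<notin> K" and L: "\<forall>K\<in>L. w \<notin> K"
  shows "elementary_collapse\<^sup>*\<^sup>* (D \<union> insert w ` L) (D \<union> insert w ` L')"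
  using assms(1)
proof (induct rule: rtranclp_induct)
  case base
  then show ?case by simp
next
  case (step Lm L2)
  have "Lm \<subseteq> L" using step(1) by (rule rt_sub)
  then have "\<forall>K\<in>Lm. w \<notin> K" using L by auto
  then have "elementary_collapse (D \<union> insert w ` Lm) (D \<union> insert w ` L2)"
    using ec_lift[OF step(2) D] by simp
  then show ?case using step(3) by simp
qed

lemma last_step:
  assumes D: "\<forall>K\<in>D. w \<notin> K" and uw: "u \<noteq> w"
  shows "elementary_collapse (D \<union> {{w}, {w, u}}) D"
proof -
  let ?T = "D \<union> {{w}, {w, u}}"
  have fac: "facet ?T {w, u}" unfolding facet_def using D uw by auto
  have ff: "free_face ?T {w}" unfolding free_face_def
  proof (intro conjI)
    show "{w} \<in> ?T" by simp
    show "{w} \<noteq> {}" by simp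
    show "\<not> facet ?T {w}" unfolding facet_def using uw by auto
    show "\<exists>!G. facet ?T G \<and> {w} \<subseteq> G"
    proof (rule ex1I[of _ "{w, u}"])
      show "facet ?T {w, u} \<and> {w} \<subseteq> {w, u}" using fac by simp
      fix H assume H: "facet ?T H \<and> {w} \<subseteq> H"
      then have HT: "H \<in> ?T" by (simp add: facet_def)
      have wH: "w \<in> H" using H by simp
      have "H \<notin> D"
      proof
        assume "H \<in> D"
        with D have "w \<notin> H" by (rule bspec)
        with wH show False by simp
      qed
      with HT have "H = {w} \<or> H = {w, u}" by simp
      moreover have "H \<noteq> {w}"
      proof
        assume "H = {w}"
        with H have "facet ?T {w}" by simp
        moreover have "{w, u} \<in> ?T" "{w} \<subseteq> {w, u}" by auto
        ultimately have "{w, u} = {w}" unfolding facet_def by blast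
        with uw show False by auto
      qed
      ultimately show "H = {w, u}" by simp
    qed
  qed
  have eq: "D = ?T - {G \<in> ?T. {w} \<subseteq> G}"
  proof (rule set_eqI, rule iffI)
    fix X assume X: "X \<in> D"
    with D have "w \<notin> X" by (rule bspec)
    then show "X \<in> ?T - {G \<in> ?T. {w} \<subseteq> G}" using X by blast
  next
    fix X assume "X \<in> ?T - {G \<in> ?T. {w} \<subseteq> G}"
    then have XT: "X \<in> ?T" and nw: "\<not> {w} \<subseteq> X" by blast+
    from nw have "w \<notin> X" by simp
    with XT show "X \<in> D" by blast
  qed
  show ?thesis unfolding elementary_collapse_def by (rule exI[of _ "{w}"], rule conjI[OF ff eq])
qed

lemma star_collapse:
  assumes c: "collapsible L" and D: "\<forall>K\<in>D. w \<notin> K" and L: "\<forall>K\<in>L. w \<notin> K"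
  shows "collapses_to (D \<union> insert w ` L) D"
proof -
  from c obtain u where u: "elementary_collapse\<^sup>*\<^sup>* L {{}, {u}}"
    by (auto simp: collapsible_def collapses_to_def)
  have "{u} \<in> L" using rt_sub[OF u] by auto
  then have uw: "u \<noteq> w" using L by auto
  have "elementary_collapse\<^sup>*\<^sup>* (D \<union> insert w ` L) (D \<union> insert w ` {{}, {u}})"
    by (rule rt_lift[OF u D L])
  moreover have "D \<union> insert w ` {{}, {u}} = D \<union> {{w}, {w, u}}" by auto
  ultimately have "elementary_collapse\<^sup>*\<^sup>* (D \<union> insert w ` L) (D \<union> {{w}, {w, u}})" by simp
  moreover have "elementary_collapse (D \<union> {{w}, {w, u}}) D" by (rule last_step[OF D uw])
  ultimately show ?thesis unfolding collapses_to_def by simp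
qed

lemma ex_max_aux:
  assumes tot: "\<And>x y. x \<in> V \<Longrightarrow> y \<in> V \<Longrightarrow> (x, y) \<in> r \<or> (y, x) \<in> r"
    and tr: "\<And>x y z. x \<in> V \<Longrightarrow> y \<in> V \<Longrightarrow> z \<in> V \<Longrightarrow> (x, y) \<in> r \<Longrightarrow> (y, z) \<in> r \<Longrightarrow> (x, z) \<in> r"
  shows "finite F \<Longrightarrow> F \<noteq> {} \<Longrightarrow> F \<subseteq> V \<Longrightarrow> \<exists>w\<in>F. \<forall>x\<in>F. (x, w) \<in> r"
proof (induction F rule: finite_ne_induct)
  case (singleton x)
  then have "(x, x) \<in> r" using tot by blast
  then show ?case by simp
next
  case (insert x F)
  then have xV: "x \<in> V" and FV: "F \<subseteq> V" by auto
  obtain w where w: "w \<in> F" "\<forall>y\<in>F. (y, w) \<in> r" using insert.IH[OF FV] by blast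
  have wV: "w \<in> V" using w FV by auto
  have xx: "(x, x) \<in> r" using tot[OF xV xV] by simp
  show ?case
  proof (cases "(w, x) \<in> r")
    case True
    have "\<forall>y\<in>insert x F. (y, x) \<in> r"
    proof
      fix y assume "y \<in> insert x F"
      then show "(y, x) \<in> r"
      proof
        assume "y = x" then show ?thesis using xx by simp
      next
        assume yF: "y \<in> F"
        then have "(y, w) \<in> r" using w by blast
        moreover have "y \<in> V" using yF FV by auto
        ultimately show ?thesis using tr[OF _ wV xV _ True] by blast
      qed
    qed
    then show ?thesis by blast
  next
    case False
    then have "(x, w) \<in> r" using tot[OF xV wV] by blast
    then have "\<forall>y\<in>insert x F. (y, w) \<in> r" using w by blast
    then show ?thesis using w by blast
  qed
qed

lemma okpD:
  assumes "okp V d R A" "j < d"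
  shows okpT: "x \<in> V \<Longrightarrow> y \<in> V \<Longrightarrow> (x, y) \<in> R j \<or> (y, x) \<in> R j"
    and okpTr: "x \<in> V \<Longrightarrow> y \<in> V \<Longrightarrow> z \<in> V \<Longrightarrow> (x, y) \<in> R j \<Longrightarrow> (y, z) \<in> R j \<Longrightarrow> (x, z) \<in> R j"
    and okpAV: "A j \<subseteq> V"
    and okpUp: "x \<in> A j \<Longrightarrow> y \<in> V \<Longrightarrow> (x, y) \<in> R j \<Longrightarrow> y \<in> A j"
proof -
  have A: "\<forall>j<d. (\<forall>x\<in>V. \<forall>y\<in>V. (x, y) \<in> R j \<or> (y, x) \<in> R j) \<and>
     (\<forall>x\<in>V. \<forall>y\<in>V. \<forall>z\<in>V. (x, y) \<in> R j \<longrightarrow> (y, z) \<in> R j \<longrightarrow> (x, z) \<in> R j) \<and>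
     A j \<subseteq> V \<and> (\<forall>x\<in>A j. \<forall>y\<in>V. (x, y) \<in> R j \<longrightarrow> y \<in> A j)"
    using assms(1) unfolding okp_def by (rule conjunct2)
  have H: "(\<forall>x\<in>V. \<forall>y\<in>V. (x, y) \<in> R j \<or> (y, x) \<in> R j) \<and>
     (\<forall>x\<in>V. \<forall>y\<in>V. \<forall>z\<in>V. (x, y) \<in> R j \<longrightarrow> (y, z) \<in> R j \<longrightarrow> (x, z) \<in> R j) \<and>
     A j \<subseteq> V \<and> (\<forall>x\<in>A j. \<forall>y\<in>V. (x, y) \<in> R j \<longrightarrow> y \<in> A j)"
    using spec[OF A, of j] assms(2) by (rule mp)
  note H1 = conjunct1[OF H]
  note H2 = conjunct1[OF conjunct2[OF H]]
  note H3 = conjunct1[OF conjunct2[OF conjunct2[OF H]]]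
  note H4 = conjunct2[OF conjunct2[OF conjunct2[OF H]]]
  show "x \<in> V \<Longrightarrow> y \<in> V \<Longrightarrow> (x, y) \<in> R j \<or> (y, x) \<in> R j" using H1 by blast
  show "x \<in> V \<Longrightarrow> y \<in> V \<Longrightarrow> z \<in> V \<Longrightarrow> (x, y) \<in> R j \<Longrightarrow> (y, z) \<in> R j \<Longrightarrow> (x, z) \<in> R j"
    using H2 by blast
  show "A j \<subseteq> V" by (rule H3)
  show "x \<in> A j \<Longrightarrow> y \<in> V \<Longrightarrow> (x, y) \<in> R j \<Longrightarrow> y \<in> A j" using H4 by blast
qed

lemma okp_sub:
  assumes ok: "okp V d R A" and sub: "V' \<subseteq> V"
    and A': "\<And>j. j < d \<Longrightarrow> A' j \<subseteq> V'"
    and up: "\<And>j x y. j < d \<Longrightarrow> x \<in> A' j \<Longrightarrow> y \<in> V' \<Longrightarrow> (x, y) \<in> R j \<Longrightarrow> y \<in> A' j"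
  shows "okp V' d R A'"
proof -
  have "finite V" using ok by (simp add: okp_def)
  then have fin: "finite V'" using sub by (rule finite_subset[rotated])
  have T: "\<forall>j<d. \<forall>x\<in>V'. \<forall>y\<in>V'. (x, y) \<in> R j \<or> (y, x) \<in> R j"
  proof (intro allI impI ballI)
    fix j x y assume "j < d" "x \<in> V'" "y \<in> V'"
    then have "x \<in> V" "y \<in> V" using sub by auto
    then show "(x, y) \<in> R j \<or> (y, x) \<in> R j" by (rule okpT[OF ok \<open>j < d\<close>])
  qed
  have Tr: "\<forall>j<d. \<forall>x\<in>V'. \<forall>y\<in>V'. \<forall>z\<in>V'. (x, y) \<in> R j \<longrightarrow> (y, z) \<in> R j \<longrightarrow> (x, z) \<in> R j"
  proof (intro allI impI ballI)
    fix j x y z assume "j < d" "x \<in> V'" "y \<in> V'" "z \<in> V'" "(x, y) \<in> R j" "(y, z) \<in> R j"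
    moreover then have "x \<in> V" "y \<in> V" "z \<in> V" using sub by auto
    ultimately show "(x, z) \<in> R j" using okpTr[OF ok \<open>j < d\<close>] by blast
  qed
  show ?thesis unfolding okp_def
  proof (intro conjI allI impI)
    fix j assume j: "j < d"
    show "\<forall>x\<in>V'. \<forall>y\<in>V'. (x, y) \<in> R j \<or> (y, x) \<in> R j" using T j by blast
    show "\<forall>x\<in>V'. \<forall>y\<in>V'. \<forall>z\<in>V'. (x, y) \<in> R j \<longrightarrow> (y, z) \<in> R j \<longrightarrow> (x, z) \<in> R j"
      using Tr j by blast
    show "A' j \<subseteq> V'" using A' j by blast
    show "\<forall>x\<in>A' j. \<forall>y\<in>V'. (x, y) \<in> R j \<longrightarrow> y \<in> A' j" using up j by blast
  qed (rule fin)
qed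

lemma cc_empty_mem: "K \<in> cc V d R A \<Longrightarrow> {} \<in> cc V d R A"
  by (auto simp: cc_def)

lemma cc_emptyset: "cc {} d R A = {{}}"
  by (auto simp: cc_def)

lemma main_cc:
  assumes "okp V d R A" "V \<noteq> {}" "cc V d R A \<noteq> {}"
  shows "collapsible (cc V d R A)"
  using assms
proof (induction "card V" arbitrary: V A rule: less_induct)
  case less
  let ?C = "cc V d R A"
  have fin: "finite V" using less.prems(1) by (simp add: okp_def)
  have T: "\<And>j x y. j < d \<Longrightarrow> x \<in> V \<Longrightarrow> y \<in> V \<Longrightarrow> (x, y) \<in> R j \<or> (y, x) \<in> R j"
    using okpT[OF less.prems(1)] by blast
  have Tr: "\<And>j x y z. j < d \<Longrightarrow> x \<in> V \<Longrightarrow> y \<in> V \<Longrightarrow> z \<in> V \<Longrightarrow> (x, y) \<in> R j \<Longrightarrow> (y, z) \<in> R j \<Longrightarrow> (x, z) \<in> R j"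
    using okpTr[OF less.prems(1)] by blast
  have AV: "\<And>j. j < d \<Longrightarrow> A j \<subseteq> V"
    using okpAV[OF less.prems(1)] by blast
  have Up: "\<And>j x y. j < d \<Longrightarrow> x \<in> A j \<Longrightarrow> y \<in> V \<Longrightarrow> (x, y) \<in> R j \<Longrightarrow> y \<in> A j"
    using okpUp[OF less.prems(1)] by blast
  have e: "{} \<in> ?C" using less.prems(3) cc_empty_mem by blast
  obtain q where q: "q \<in> V" using less.prems(2) by blast
  have "\<forall>q\<in>V. \<exists>j<d. q \<in> A j \<and> (\<forall>f\<in>{}. (f, q) \<in> R j)"
    using e unfolding cc_def by blast
  then have "\<exists>j<d. q \<in> A j" using q by blast
  then obtain i where i: "i < d" "q \<in> A i" by blast
  have "\<exists>w\<in>V. \<forall>x\<in>V. (x, w) \<in> R i"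
  proof (rule ex_max_aux[of V "R i" V])
    show "\<And>x y. x \<in> V \<Longrightarrow> y \<in> V \<Longrightarrow> (x, y) \<in> R i \<or> (y, x) \<in> R i" by (rule T[OF i(1)])
    show "\<And>x y z. x \<in> V \<Longrightarrow> y \<in> V \<Longrightarrow> z \<in> V \<Longrightarrow> (x, y) \<in> R i \<Longrightarrow> (y, z) \<in> R i \<Longrightarrow> (x, z) \<in> R i"
      by (rule Tr[OF i(1)])
  qed (use fin less.prems(2) in auto)
  then obtain w where w: "w \<in> V" "\<forall>x\<in>V. (x, w) \<in> R i" by blast
  have wA: "w \<in> A i" using Up[OF i(1) i(2) w(1)] w(2) q by blast
  have ww: "(w, w) \<in> R i" using w by blast
  define D where "D = {K \<in> ?C. w \<notin> K}"
  define L where "L = {K. w \<notin> K \<and> insert w K \<in> ?C}"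
  define A1 where "A1 = (\<lambda>j. A j - {w})"
  define A2 where "A2 = (\<lambda>j. {q \<in> A j. q \<noteq> w \<and> (w, q) \<in> R j})"
  have Dw: "\<forall>K\<in>D. w \<notin> K" by (simp add: D_def)
  have Lw: "\<forall>K\<in>L. w \<notin> K" by (simp add: L_def)
  have split: "?C = D \<union> insert w ` L"
  proof (rule set_eqI, rule iffI)
    fix X assume X: "X \<in> ?C"
    show "X \<in> D \<union> insert w ` L"
    proof (cases "w \<in> X")
      case True
      then have XX: "X = insert w (X - {w})" by auto
      have "X - {w} \<in> L" using X XX unfolding L_def by simp
      then show ?thesis using XX by blast
    next
      case False
      then show ?thesis using X unfolding D_def by simp
    qed
  next
    fix X assume "X \<in> D \<union> insert w ` L"
    then show "X \<in> ?C" unfolding D_def L_def by blast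
  qed
  have D_eq: "D = cc (V - {w}) d R A1"
  proof (rule set_eqI, rule iffI)
    fix K assume "K \<in> D"
    then have K: "K \<subseteq> V" "w \<notin> K" "\<forall>q\<in>V. \<exists>j<d. q \<in> A j \<and> (\<forall>f\<in>K. (f, q) \<in> R j)"
      by (auto simp: D_def cc_def)
    show "K \<in> cc (V - {w}) d R A1" unfolding cc_def A1_def using K by blast
  next
    fix K assume "K \<in> cc (V - {w}) d R A1"
    then have K: "K \<subseteq> V - {w}" "\<forall>q\<in>V - {w}. \<exists>j<d. q \<in> A j - {w} \<and> (\<forall>f\<in>K. (f, q) \<in> R j)"
      by (auto simp: cc_def A1_def)
    have "\<forall>q\<in>V. \<exists>j<d. q \<in> A j \<and> (\<forall>f\<in>K. (f, q) \<in> R j)"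
    proof
      fix q assume qV: "q \<in> V"
      show "\<exists>j<d. q \<in> A j \<and> (\<forall>f\<in>K. (f, q) \<in> R j)"
      proof (cases "q = w")
        case True
        have "\<forall>f\<in>K. (f, w) \<in> R i" using w(2) K(1) by blast
        then show ?thesis using True i(1) wA by blast
      next
        case False
        then show ?thesis using K(2) qV by blast
      qed
    qed
    then show "K \<in> D" using K(1) unfolding D_def cc_def by blast
  qed
  have L_eq: "L = cc (V - {w}) d R A2"
  proof (rule set_eqI, rule iffI)
    fix K assume "K \<in> L"
    then have K: "w \<notin> K" "insert w K \<subseteq> V"
      "\<forall>q\<in>V. \<exists>j<d. q \<in> A j \<and> (\<forall>f\<in>insert w K. (f, q) \<in> R j)"
      by (auto simp: L_def cc_def)
    have "\<forall>q\<in>V - {w}. \<exists>j<d. q \<in> A2 j \<and> (\<forall>f\<in>K. (f, q) \<in> R j)"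
    proof
      fix q assume qV: "q \<in> V - {w}"
      then obtain j where j: "j < d" "q \<in> A j" "\<forall>f\<in>insert w K. (f, q) \<in> R j" using K(3) by blast
      then have "q \<in> A2 j" using qV unfolding A2_def by blast
      then show "\<exists>j<d. q \<in> A2 j \<and> (\<forall>f\<in>K. (f, q) \<in> R j)" using j by blast
    qed
    moreover have "K \<subseteq> V - {w}" using K by blast
    ultimately show "K \<in> cc (V - {w}) d R A2" unfolding cc_def by blast
  next
    fix K assume "K \<in> cc (V - {w}) d R A2"
    then have K: "K \<subseteq> V - {w}" "\<forall>q\<in>V - {w}. \<exists>j<d. q \<in> A2 j \<and> (\<forall>f\<in>K. (f, q) \<in> R j)"
      by (auto simp: cc_def)
    have "\<forall>q\<in>V. \<exists>j<d. q \<in> A j \<and> (\<forall>f\<in>insert w K. (f, q) \<in> R j)"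
    proof
      fix q assume qV: "q \<in> V"
      show "\<exists>j<d. q \<in> A j \<and> (\<forall>f\<in>insert w K. (f, q) \<in> R j)"
      proof (cases "q = w")
        case True
        have "\<forall>f\<in>insert w K. (f, w) \<in> R i" using w(2) K(1) w(1) by blast
        then show ?thesis using True i(1) wA by blast
      next
        case False
        then obtain j where j: "j < d" "q \<in> A2 j" "\<forall>f\<in>K. (f, q) \<in> R j" using K(2) qV by blast
        then have "q \<in> A j" "(w, q) \<in> R j" unfolding A2_def by auto
        then show ?thesis using j by blast
      qed
    qed
    moreover have "insert w K \<subseteq> V" "w \<notin> K" using K(1) w(1) by auto
    ultimately show "K \<in> L" unfolding L_def cc_def by blast
  qed
  show ?case
  proof (cases "V - {w} = {}")
    case True
    have "D = {{}}" "L = {{}}" using D_eq L_eq True cc_emptyset by simp_all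
    then have C1: "?C = {{w}, {}}" using split by simp
    have "{{w}, {}} = {{}, {w}}" by auto
    with C1 have C2: "?C = {{}, {w}}" by simp
    show ?thesis unfolding collapsible_def collapses_to_def C2 by (rule exI[of _ w]) simp
  next
    case False
    have lt: "card (V - {w}) < card V" using fin w(1) by (rule card_Diff1_less)
    have ok1: "okp (V - {w}) d R A1"
    proof (rule okp_sub[OF less.prems(1)])
      show "V - {w} \<subseteq> V" by blast
      fix j assume j: "j < d"
      show "A1 j \<subseteq> V - {w}" using AV[OF j] unfolding A1_def by blast
      fix x y assume x: "x \<in> A1 j" and y: "y \<in> V - {w}" and xy: "(x, y) \<in> R j"
      have "y \<in> A j" using Up[OF j _ _ xy] x y unfolding A1_def by blast
      then show "y \<in> A1 j" using y unfolding A1_def by blast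
    qed
    have ok2: "okp (V - {w}) d R A2"
    proof (rule okp_sub[OF less.prems(1)])
      show "V - {w} \<subseteq> V" by blast
      fix j assume j: "j < d"
      show "A2 j \<subseteq> V - {w}" using AV[OF j] unfolding A2_def by blast
      fix x y assume x: "x \<in> A2 j" and y: "y \<in> V - {w}" and xy: "(x, y) \<in> R j"
      have xA: "x \<in> A j" and xw: "(w, x) \<in> R j" using x unfolding A2_def by auto
      have xV: "x \<in> V" using xA AV[OF j] by blast
      have yV: "y \<in> V" using y by blast
      have "y \<in> A j" using Up[OF j xA yV xy] .
      moreover have "(w, y) \<in> R j" using Tr[OF j w(1) xV yV xw xy] .
      ultimately show "y \<in> A2 j" using y unfolding A2_def by blast
    qed
    have "{} \<in> D" using e unfolding D_def by simp
    then have cD: "collapsible D"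
      using less.hyps[OF lt ok1 False] D_eq by auto
    show ?thesis
    proof (cases "L = {}")
      case True
      then show ?thesis using split cD by simp
    next
      case Lne: False
      have cL: "collapsible L" using less.hyps[OF lt ok2 False] L_eq Lne by auto
      have "collapses_to ?C D" using split star_collapse[OF cL Dw Lw] by simp
      moreover obtain v where "collapses_to D {{}, {v}}" using cD unfolding collapsible_def by blast
      ultimately have "collapses_to ?C {{}, {v}}" unfolding collapses_to_def by (rule rtranclp_trans)
      then show ?thesis unfolding collapsible_def by blast
    qed
  qed
qed

theorem theorem2:
  fixes V :: "'a set" and d :: nat and R :: "nat \<Rightarrow> 'a rel"
  assumes "finite V" and "V \<noteq> {}" and "d \<ge> 1"
    and "d_representation V d R"
  shows "collapsible (supremum_section V d R)"
proof -
  have eq: "supremum_section V d R = cc V d R (\<lambda>j. V)"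
    by (auto simp: supremum_section_def cc_def dominates_in_rep_def dominates_in_order_def)
  have lin: "\<And>j. j < d \<Longrightarrow> linear_order_on V (R j)"
    using assms(4) by (simp add: d_representation_def)
  have ok: "okp V d R (\<lambda>j. V)"
    unfolding okp_def
  proof (intro conjI allI impI ballI)
    show "finite V" by (rule assms(1))
  next
    fix j x y assume j: "j < d" and x: "x \<in> V" and y: "y \<in> V"
    show "(x, y) \<in> R j \<or> (y, x) \<in> R j"
      using lin[OF j] x y unfolding linear_order_on_def partial_order_on_def preorder_on_def
        refl_on_def total_on_def by metis
  next
    fix j x y z assume j: "j < d" and "x \<in> V" "y \<in> V" "z \<in> V"
      and xy: "(x, y) \<in> R j" and yz: "(y, z) \<in> R j"
    show "(x, z) \<in> R j"
      using lin[OF j] xy yz unfolding linear_order_on_def partial_order_on_def preorder_on_def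
      by (meson transD)
  qed auto
  have "0 < d" using assms(3) by simp
  then have "{} \<in> cc V d R (\<lambda>j. V)" by (auto simp: cc_def)
  then have "cc V d R (\<lambda>j. V) \<noteq> {}" by blast
  then show ?thesis using main_cc[OF ok assms(2)] eq by simp
qed

end
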